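(* For every nested sequence $\Gamma=(\Gamma_j)_{j\ge1}$, $\Gamma_1\supset\Gamma_2\supset\cdots$, of lattices in $H_3(\mathbb R)$, we have $\tau(S_\Gamma)\supset\xi_\Gamma$.
   Context: $H_3(\mathbb R)$: real $3\times3$ upper triangular unipotent matrices; $c(t)$ has $(1,3)$ entry $t$, other off-diagonal entries $0$; for $g$ with $(1,2)$ entry $t_1$ and $(2,3)$ entry $t_2$, $p(g)=(t_1,t_2)$. A lattice is a discrete subgroup of finite covolume. For a lattice $\Lambda$: $\xi_\Lambda>0$ with $\Lambda\cap\{c(t)\}=\{c(m\xi_\Lambda):m\in\mathbb Z\}$; $p(\Lambda)=A\mathbb Z^2$ and $p(\Lambda)^*:=(A^* )^{-1}\mathbb Z^2$. $S_\Gamma:=\bigcup_jp(\Gamma_j)^*$ and $\xi_\Gamma:=\bigcup_j\xi_{\Gamma_j}^{-1}\mathbb Z$; $S_\Gamma$ is off-rational. Off-rational: a subgroup $S\subset\mathbb R^m$ with cocompact closure and $S=AQ$ for $A\in GL_m(\mathbb R)$ and a subgroup $Q\subset\mathbb Q^m$; writing $Q=\bigcup_jA_j^{-1}\mathbb Z^m$ with $A_j\in GL_m(\mathbb R)\cap M_m(\mathbb Z)$, $A_1^{-1}\mathbb Z^m\subset A_2^{-1}\mathbb Z^m\subset\cdots$, set $\tau(S):=\bigcup_j\frac{\det A}{\det A_j}\mathbb Z$ (independent of the choices). *)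

theory Defs
  imports "HOL-Analysis.Analysis"
begin

text \<open>An element (t1, t2, t3) stands for the unipotent upper triangular matrix
  with (1,2) entry t1, (2,3) entry t2 and (1,3) entry t3.  Matrix multiplication
  becomes the following group law.  Lebesgue measure on these coordinates is
  (bi-invariant) Haar measure.\<close>

type_synonym h3 = "real \<times> real \<times> real"

definition h3_mult :: "h3 \<Rightarrow> h3 \<Rightarrow> h3" where
  "h3_mult a b = (fst a + fst b, fst (snd a) + fst (snd b),
                  snd (snd a) + snd (snd b) + fst a * fst (snd b))"

definition h3_one :: h3 where "h3_one = (0, 0, 0)"

definition h3_inv :: "h3 \<Rightarrow> h3" where
  "h3_inv a = (- fst a, - fst (snd a), fst a * fst (snd a) - snd (snd a))"

definition h3_c :: "real \<Rightarrow> h3" where "h3_c t = (0, 0, t)"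

definition h3_p :: "h3 \<Rightarrow> real^2" where
  "h3_p g = vector [fst g, fst (snd g)]"

definition h3_subgroup :: "h3 set \<Rightarrow> bool" where
  "h3_subgroup L \<longleftrightarrow> h3_one \<in> L \<and> (\<forall>a\<in>L. \<forall>b\<in>L. h3_mult a b \<in> L)
      \<and> (\<forall>a\<in>L. h3_inv a \<in> L)"

definition discrete_set :: "h3 set \<Rightarrow> bool" where
  "discrete_set L \<longleftrightarrow> (\<forall>x\<in>L. \<exists>e>0. \<forall>y\<in>L. dist y x < e \<longrightarrow> y = x)"

definition finite_covolume :: "h3 set \<Rightarrow> bool" where
  "finite_covolume L \<longleftrightarrow> (\<exists>F \<in> sets lborel. emeasure lborel F < \<infinity> \<and>
      (\<forall>g. \<exists>!\<gamma>. \<gamma> \<in> L \<and> (\<exists>f\<in>F. g = h3_mult \<gamma> f)))"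

definition h3_lattice :: "h3 set \<Rightarrow> bool" where
  "h3_lattice L \<longleftrightarrow> h3_subgroup L \<and> discrete_set L \<and> finite_covolume L"

definition xi :: "h3 set \<Rightarrow> real" where
  "xi L = (THE x. x > 0 \<and> {t. h3_c t \<in> L} = {of_int m * x | m. True})"

definition Zvec :: "(real^2) set" where
  "Zvec = {v. \<forall>i. v $ i \<in> \<int>}"

definition int_matrix :: "real^2^2 \<Rightarrow> bool" where
  "int_matrix A \<longleftrightarrow> (\<forall>i j. A $ i $ j \<in> \<int>)"

definition dual_lattice :: "(real^2) set \<Rightarrow> (real^2) set" where
  "dual_lattice P = (let A = (SOME A :: real^2^2. invertible A \<and> P = (\<lambda>z. A *v z) ` Zvec)
      in (\<lambda>z. matrix_inv (transpose A) *v z) ` Zvec)"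

definition S_Gamma :: "(nat \<Rightarrow> h3 set) \<Rightarrow> (real^2) set" where
  "S_Gamma \<Gamma> = (\<Union>j. dual_lattice (h3_p ` \<Gamma> j))"

definition xi_Gamma :: "(nat \<Rightarrow> h3 set) \<Rightarrow> real set" where
  "xi_Gamma \<Gamma> = (\<Union>j. {of_int m / xi (\<Gamma> j) | m. True})"

definition off_rat_rep :: "(real^2) set \<Rightarrow> real^2^2 \<Rightarrow> (nat \<Rightarrow> real^2^2) \<Rightarrow> bool" where
  "off_rat_rep S A As \<longleftrightarrow> invertible A \<and>
     (\<forall>j. invertible (As j) \<and> int_matrix (As j)) \<and>
     (\<forall>j. (\<lambda>z. matrix_inv (As j) *v z) ` Zvec \<subseteq> (\<lambda>z. matrix_inv (As (Suc j)) *v z) ` Zvec) \<and>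
     S = (\<lambda>q. A *v q) ` (\<Union>j. (\<lambda>z. matrix_inv (As j) *v z) ` Zvec)"

definition off_rational :: "(real^2) set \<Rightarrow> bool" where
  "off_rational S \<longleftrightarrow> (\<exists>K. compact K \<and> UNIV = {x + k | x k. x \<in> closure S \<and> k \<in> K})
     \<and> (\<exists>A As. off_rat_rep S A As)"

text \<open>\<tau>(S) := \<Union>_j (det A / det A_j) Z (independent of the choice of representation).\<close>
definition tau :: "(real^2) set \<Rightarrow> real set" where
  "tau S = (SOME T. \<exists>A As. off_rat_rep S A As \<and>
      T = (\<Union>j. {det A / det (As j) * of_int m | m. True}))"

end

theory Submission
  imports Defs
begin

lemma shear_nn_integral:
  fixes f :: "real \<times> real \<times> real \<Rightarrow> ennreal"
  assumes f[measurable]: "f \<in> borel_measurable borel"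
  shows "(\<integral>\<^sup>+x. f (fst x, fst (snd x), snd (snd x) + b1 * fst x + b2 * fst (snd x)) \<partial>lborel)
       = (\<integral>\<^sup>+x. f x \<partial>lborel)"
proof -
  have P3: "(\<integral>\<^sup>+x. g x \<partial>(lborel::(real\<times>real\<times>real) measure))
     = (\<integral>\<^sup>+x1. \<integral>\<^sup>+x2. \<integral>\<^sup>+x3. g (x1,x2,x3) \<partial>lborel \<partial>lborel \<partial>lborel)"
    if g[measurable]: "g \<in> borel_measurable borel" for g :: "real \<times> real \<times> real \<Rightarrow> ennreal"
  proof -
    have "(\<integral>\<^sup>+x. g x \<partial>(lborel::(real\<times>real\<times>real) measure)) = (\<integral>\<^sup>+x. g x \<partial>(lborel \<Otimes>\<^sub>M lborel))"
      by (simp add: lborel_prod)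
    also have "\<dots> = (\<integral>\<^sup>+x1. \<integral>\<^sup>+y. g (x1,y) \<partial>lborel \<partial>lborel)"
      by (rule lborel.nn_integral_fst[symmetric]) (simp add: lborel_prod)
    also have "\<dots> = (\<integral>\<^sup>+x1. \<integral>\<^sup>+x2. \<integral>\<^sup>+x3. g (x1,x2,x3) \<partial>lborel \<partial>lborel \<partial>lborel)"
    proof (rule nn_integral_cong)
      fix x1 :: real
      have [measurable]: "(\<lambda>y. g (x1, y)) \<in> borel_measurable borel" by measurable
      have "(\<integral>\<^sup>+y. g (x1,y) \<partial>(lborel::(real\<times>real) measure)) = (\<integral>\<^sup>+y. g (x1,y) \<partial>(lborel \<Otimes>\<^sub>M lborel))"
        by (simp add: lborel_prod)
      also have "\<dots> = (\<integral>\<^sup>+x2. \<integral>\<^sup>+x3. g (x1,x2,x3) \<partial>lborel \<partial>lborel)"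
        by (rule lborel.nn_integral_fst[symmetric]) (simp add: lborel_prod)
      finally show "(\<integral>\<^sup>+y. g (x1,y) \<partial>lborel) = (\<integral>\<^sup>+x2. \<integral>\<^sup>+x3. g (x1,x2,x3) \<partial>lborel \<partial>lborel)" .
    qed
    finally show ?thesis .
  qed
  have meas: "(\<lambda>x. f (fst x, fst (snd x), snd (snd x) + b1 * fst x + b2 * fst (snd x))) \<in> borel_measurable borel"
    by (rule measurable_compose[OF _ f], rule borel_measurable_continuous_onI, intro continuous_intros)
  have "(\<integral>\<^sup>+x. f (fst x, fst (snd x), snd (snd x) + b1 * fst x + b2 * fst (snd x)) \<partial>lborel)
     = (\<integral>\<^sup>+x1. \<integral>\<^sup>+x2. \<integral>\<^sup>+x3. f (x1,x2,x3 + b1*x1 + b2*x2) \<partial>lborel \<partial>lborel \<partial>lborel)"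
    by (simp add: P3[OF meas])
  also have "\<dots> = (\<integral>\<^sup>+x1. \<integral>\<^sup>+x2. \<integral>\<^sup>+x3. f (x1,x2,x3) \<partial>lborel \<partial>lborel \<partial>lborel)"
  proof (rule nn_integral_cong, rule nn_integral_cong)
    fix x1 x2 :: real
    have [measurable]: "(\<lambda>x3. f (x1,x2,x3)) \<in> borel_measurable borel" by measurable
    show "(\<integral>\<^sup>+x3. f (x1,x2,x3 + b1*x1 + b2*x2) \<partial>lborel) = (\<integral>\<^sup>+x3. f (x1,x2,x3) \<partial>lborel)"
      using nn_integral_real_affine[of "\<lambda>x3. f (x1,x2,x3)" 1 "b1*x1 + b2*x2"]
      by (simp add: add.commute add.left_commute)
  qed
  also have "\<dots> = (\<integral>\<^sup>+x. f x \<partial>lborel)"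
    by (subst P3) simp_all
  finally show ?thesis .
qed

lemma affine_preimage_emeasure:
  fixes A :: "(real \<times> real \<times> real) set"
  assumes A: "A \<in> sets borel"
  shows "emeasure lborel ((\<lambda>x. (a1 + fst x, a2 + fst (snd x), a3 + snd (snd x) + b1 * fst x + b2 * fst (snd x))) -` A)
         = emeasure lborel A"
proof -
  let ?a = "(a1, a2, a3) :: real \<times> real \<times> real"
  let ?T = "(\<lambda>x. (a1 + fst x, a2 + fst (snd x), a3 + snd (snd x) + b1 * fst x + b2 * fst (snd x)))"
  have cT: "continuous_on UNIV ?T" by (intro continuous_intros)
  have mT: "?T \<in> borel_measurable borel" by (rule borel_measurable_continuous_onI[OF cT])
  have pre: "?T -` A \<in> sets borel"
    using measurable_sets[OF mT A] by simp
  have f: "(\<lambda>y. indicator A (?a + y) :: ennreal) \<in> borel_measurable borel"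
    by (rule measurable_compose[OF _ borel_measurable_indicator[OF A]])
       (rule borel_measurable_continuous_onI, intro continuous_intros)
  have "emeasure lborel (?T -` A) = (\<integral>\<^sup>+x. indicator (?T -` A) x \<partial>lborel)"
    using pre by simp
  also have "\<dots> = (\<integral>\<^sup>+x. indicator A (?a + (fst x, fst (snd x), snd (snd x) + b1 * fst x + b2 * fst (snd x))) \<partial>lborel)"
    by (intro nn_integral_cong) (auto simp: indicator_def algebra_simps)
  also have "\<dots> = (\<integral>\<^sup>+x. indicator A (?a + x) \<partial>lborel)"
    by (rule shear_nn_integral[OF f])
  also have "\<dots> = (\<integral>\<^sup>+x. indicator A x \<partial>(distr lborel borel ((+) ?a)))"
    using A by (subst nn_integral_distr) auto
  also have "\<dots> = (\<integral>\<^sup>+x. indicator A x \<partial>lborel)"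
    by (simp add: lborel_distr_plus)
  also have "\<dots> = emeasure lborel A" using A by simp
  finally show ?thesis .
qed

lemma h3_mult_comp: "h3_mult a b = (fst a + fst b, fst (snd a) + fst (snd b),
                  snd (snd a) + snd (snd b) + fst a * fst (snd b))"
  by (simp add: h3_mult_def)

lemma left_mult_emeasure:
  assumes "A \<in> sets borel"
  shows "emeasure lborel ((\<lambda>x. h3_mult g x) -` A) = emeasure lborel A"
  using affine_preimage_emeasure[OF assms, of "fst g" "fst (snd g)" "snd (snd g)" 0 "fst g"]
  by (simp add: h3_mult_comp algebra_simps)

lemma right_mult_emeasure:
  assumes "A \<in> sets borel"
  shows "emeasure lborel ((\<lambda>x. h3_mult x g) -` A) = emeasure lborel A"
  using affine_preimage_emeasure[OF assms, of "fst g" "fst (snd g)" "snd (snd g)" "fst (snd g)" 0]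
  by (simp add: h3_mult_comp algebra_simps)

lemma mult_continuous: "continuous_on UNIV (\<lambda>x. h3_mult a x)" "continuous_on UNIV (\<lambda>x. h3_mult x a)"
  by (simp_all add: h3_mult_comp, intro continuous_intros, intro continuous_intros)

lemma mult_measurable: "(\<lambda>x. h3_mult a x) \<in> borel_measurable borel" "(\<lambda>x. h3_mult x a) \<in> borel_measurable borel"
  by (rule borel_measurable_continuous_onI, rule mult_continuous)+

lemma h3_assoc: "h3_mult (h3_mult a b) c = h3_mult a (h3_mult b c)"
  by (simp add: h3_mult_def algebra_simps)
lemma h3_one_left[simp]: "h3_mult h3_one a = a" and h3_one_right[simp]: "h3_mult a h3_one = a"
  by (simp_all add: h3_mult_def h3_one_def)
lemma h3_inv_left[simp]: "h3_mult (h3_inv a) a = h3_one" and h3_inv_right[simp]: "h3_mult a (h3_inv a) = h3_one"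
  by (simp_all add: h3_mult_def h3_one_def h3_inv_def algebra_simps)
lemma h3_cancel[simp]: "h3_mult (h3_inv a) (h3_mult a b) = b" "h3_mult a (h3_mult (h3_inv a) b) = b"
  by (simp_all add: h3_mult_def h3_inv_def algebra_simps)
lemma h3_comm: "h3_mult (h3_mult g h) (h3_mult (h3_inv g) (h3_inv h)) = h3_c (fst g * fst (snd h) - fst (snd g) * fst h)"
  by (simp add: h3_mult_def h3_inv_def h3_c_def algebra_simps)
lemma h3_c_mult: "h3_mult (h3_c s) (h3_c t) = h3_c (s + t)"
  by (simp add: h3_mult_def h3_c_def)
lemma h3_c_inv: "h3_inv (h3_c t) = h3_c (- t)"
  by (simp add: h3_inv_def h3_c_def)
lemma h3_c_zero: "h3_c 0 = h3_one" by (simp add: h3_c_def h3_one_def)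
lemma h3_one_zero: "h3_one = 0" by (simp add: h3_one_def zero_prod_def)
lemma h3_inv_comp: "h3_inv a = (- fst a, - fst (snd a), fst a * fst (snd a) - snd (snd a))"
  by (simp add: h3_inv_def)

lemma norm3_le: "norm (x::real\<times>real\<times>real) \<le> \<bar>fst x\<bar> + \<bar>fst (snd x)\<bar> + \<bar>snd (snd x)\<bar>"
proof -
  have "norm x \<le> norm (fst x) + norm (snd x)"
    by (metis norm_Pair_le prod.collapse)
  also have "norm (snd x) \<le> norm (fst (snd x)) + norm (snd (snd x))"
    by (metis norm_Pair_le prod.collapse)
  finally show ?thesis by simp
qed

lemma comp_le_norm3: "\<bar>fst x\<bar> \<le> norm (x::real\<times>real\<times>real)" "\<bar>fst (snd x)\<bar> \<le> norm x" "\<bar>snd (snd x)\<bar> \<le> norm x"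
proof -
  have a: "norm (fst x) \<le> norm x" "norm (snd x) \<le> norm x"
    by (metis norm_fst_le prod.collapse, metis norm_snd_le prod.collapse)
  have b: "norm (fst (snd x)) \<le> norm (snd x)" "norm (snd (snd x)) \<le> norm (snd x)"
    by (metis norm_fst_le prod.collapse, metis norm_snd_le prod.collapse)
  show "\<bar>fst x\<bar> \<le> norm x" using a by simp
  show "\<bar>fst (snd x)\<bar> \<le> norm x" using a b by simp
  show "\<bar>snd (snd x)\<bar> \<le> norm x" using a b by simp
qed

locale lat =
  fixes L :: "h3 set"
  assumes lat: "h3_lattice L"
begin

lemma one_in: "h3_one \<in> L" and mult_in: "a \<in> L \<Longrightarrow> b \<in> L \<Longrightarrow> h3_mult a b \<in> L"
  and inv_in: "a \<in> L \<Longrightarrow> h3_inv a \<in> L"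
  using lat by (auto simp: h3_lattice_def h3_subgroup_def)

lemma isol: obtains e where "e > 0" "\<And>y. y \<in> L \<Longrightarrow> norm y < e \<Longrightarrow> y = h3_one"
proof -
  from lat one_in obtain e where "e > 0" "\<forall>y\<in>L. dist y h3_one < e \<longrightarrow> y = h3_one"
    unfolding h3_lattice_def discrete_set_def by blast
  then show ?thesis using that by (auto simp: h3_one_zero dist_norm)
qed

lemma sep:
  assumes e: "e > 0" "\<And>y. y \<in> L \<Longrightarrow> norm y < e \<Longrightarrow> y = h3_one"
    and g: "g \<in> L" and d: "d \<in> L" and ne: "g \<noteq> d" and dn: "norm d \<le> n"
  shows "e / (3 + n) \<le> dist g d"
proof -
  have n0: "0 \<le> n" using dn norm_ge_zero order_trans by blast
  let ?y = "h3_mult (h3_inv d) g"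
  have yL: "?y \<in> L" using mult_in inv_in g d by blast
  have "?y \<noteq> h3_one"
  proof
    assume "?y = h3_one"
    then have "h3_mult d ?y = d" by simp
    then have "g = d" by (simp add: h3_assoc[symmetric])
    with ne show False by simp
  qed
  then have ey: "e \<le> norm ?y" using e(2)[OF yL] by force
  let ?u = "g - d"
  have y_eq: "?y = (fst ?u, fst (snd ?u), snd (snd ?u) - fst d * fst (snd ?u))"
    by (simp add: h3_mult_comp h3_inv_comp algebra_simps)
  have "norm ?y \<le> \<bar>fst ?u\<bar> + \<bar>fst (snd ?u)\<bar> + \<bar>snd (snd ?u) - fst d * fst (snd ?u)\<bar>"
    using norm3_le[of ?y] by (simp only: y_eq fst_conv snd_conv)
  also have "\<dots> \<le> \<bar>fst ?u\<bar> + \<bar>fst (snd ?u)\<bar> + \<bar>snd (snd ?u)\<bar> + \<bar>fst d\<bar> * \<bar>fst (snd ?u)\<bar>"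
    by (simp add: abs_mult[symmetric] abs_triangle_ineq4)
  also have "\<dots> \<le> norm ?u + norm ?u + norm ?u + n * norm ?u"
    using comp_le_norm3[of ?u] comp_le_norm3[of d] dn
    by (intro add_mono mult_mono) auto
  also have "\<dots> = (3 + n) * dist g d" by (simp add: dist_norm algebra_simps)
  finally have "e \<le> (3 + n) * dist g d" using ey by linarith
  then show ?thesis using n0 by (simp add: divide_le_eq mult.commute)
qed

lemma countable_L: "countable L"
proof -
  obtain e where e: "e > 0" "\<And>y. y \<in> L \<Longrightarrow> norm y < e \<Longrightarrow> y = h3_one" using isol by blast
  have cn: "countable (L \<inter> cball 0 (real n))" for n :: nat
  proof -
    define c where "c = e / (3 + real n)"
    define r where "r = c / 2"
    have r: "r > 0" using e by (simp add: r_def c_def)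
    have r2: "2 * r = e / (3 + real n)" unfolding r_def c_def[symmetric] by simp
    let ?B = "(\<lambda>g. ball g r) ` (L \<inter> cball 0 (real n))"
    have disj: "pairwise disjnt ?B"
    proof (clarsimp simp: pairwise_def disjnt_def)
      fix g d assume g: "g \<in> L" "norm g \<le> real n" and d: "d \<in> L" "norm d \<le> real n"
        and ne: "ball g r \<noteq> ball d r"
      then have "g \<noteq> d" by auto
      then have "2 * r \<le> dist g d" using sep[OF e g(1) d(1) _ d(2)] by (simp add: r2)
      show "ball g r \<inter> ball d r = {}"
      proof (rule ccontr)
        assume "ball g r \<inter> ball d r \<noteq> {}"
        then obtain z where z: "dist g z < r" "dist d z < r" by auto
        have "dist g d \<le> dist g z + dist d z" using dist_triangle3[of g d z] by (simp add: dist_commute)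
        with z \<open>2 * r \<le> dist g d\<close> show False by linarith
      qed
    qed
    have "countable ?B" by (rule countable_disjoint_open_subsets[OF _ disj]) auto
    moreover have "inj_on (\<lambda>g. ball g r) (L \<inter> cball 0 (real n))"
    proof (rule inj_onI)
      fix g d assume g: "g \<in> L \<inter> cball 0 (real n)" and d: "d \<in> L \<inter> cball 0 (real n)"
        and eq: "ball g r = ball d r"
      show "g = d"
      proof (rule ccontr)
        assume "g \<noteq> d"
        then have "2 * r \<le> dist g d" using sep[OF e, of g d n] g d by (simp add: r2)
        moreover have "g \<in> ball d r" using eq r by (metis centre_in_ball)
        ultimately show False using r by (simp add: dist_commute)
      qed
    qed
    ultimately show ?thesis using countable_image_inj_on by blast
  qed
  have "L = (\<Union>n. L \<inter> cball 0 (real n))"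
    by (auto simp: real_arch_simple)
  moreover have "countable (\<Union>n. L \<inter> cball 0 (real n))" using cn by (intro countable_UN) auto
  ultimately show ?thesis by simp
qed

lemma fund: obtains F where "F \<in> sets borel" "emeasure lborel F < \<infinity>"
  "\<And>g. \<exists>!\<gamma>. \<gamma> \<in> L \<and> (\<exists>f\<in>F. g = h3_mult \<gamma> f)"
  using lat unfolding h3_lattice_def finite_covolume_def by auto

end

lemma box_emeasure:
  assumes "r > 0"
  shows "emeasure lborel {x::h3. \<bar>fst x\<bar> < r \<and> \<bar>fst (snd x)\<bar> < r \<and> \<bar>snd (snd x)\<bar> < r}
     = ennreal (8 * r^3)"
proof -
  have eq: "{x::h3. \<bar>fst x\<bar> < r \<and> \<bar>fst (snd x)\<bar> < r \<and> \<bar>snd (snd x)\<bar> < r}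
      = {-r<..<r} \<times> ({-r<..<r} \<times> {-r<..<r})"
    by (auto simp: abs_less_iff)
  have le: "-r \<le> r" using assms by simp
  have "emeasure (lborel::h3 measure) ({-r<..<r} \<times> ({-r<..<r} \<times> {-r<..<r}))
      = emeasure (lborel \<Otimes>\<^sub>M lborel) ({-r<..<r} \<times> ({-r<..<r} \<times> {-r<..<r}))"
    by (simp add: lborel_prod)
  also have "\<dots> = emeasure lborel {-r<..<r} * emeasure lborel ({-r<..<r} \<times> {-r<..<r})"
    by (rule lborel.emeasure_pair_measure_Times) (auto intro!: borel_open open_Times)
  also have "emeasure (lborel::(real\<times>real) measure) ({-r<..<r} \<times> {-r<..<r})
      = emeasure (lborel \<Otimes>\<^sub>M lborel) ({-r<..<r} \<times> {-r<..<r})"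
    by (simp add: lborel_prod)
  also have "\<dots> = emeasure lborel {-r<..<r} * emeasure lborel {-r<..<r}"
    by (rule lborel.emeasure_pair_measure_Times) auto
  finally show ?thesis using assms
    by (simp add: eq le ennreal_mult[symmetric] power3_eq_cube)
qed

context lat begin

lemma minkowski:
  assumes F: "F \<in> sets borel" and Fd: "\<And>g. \<exists>!\<gamma>. \<gamma> \<in> L \<and> (\<exists>f\<in>F. g = h3_mult \<gamma> f)"
    and E: "E \<in> sets borel"
    and inj: "\<And>x \<gamma>. x \<in> E \<Longrightarrow> \<gamma> \<in> L \<Longrightarrow> h3_mult \<gamma> x \<in> E \<Longrightarrow> \<gamma> = h3_one"
  shows "emeasure lborel E \<le> emeasure lborel F"
proof -
  define \<Phi> where "\<Phi> \<gamma> = E \<inter> (\<lambda>x. h3_mult (h3_inv \<gamma>) x) -` F" for \<gamma>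
  define \<Psi> where "\<Psi> \<gamma> = (\<lambda>f. h3_mult \<gamma> f) -` \<Phi> \<gamma>" for \<gamma>
  have m\<Phi>: "\<Phi> \<gamma> \<in> sets borel" for \<gamma>
    unfolding \<Phi>_def using measurable_sets[OF mult_measurable(1) F] E by simp
  have m\<Psi>: "\<Psi> \<gamma> \<in> sets borel" for \<gamma>
    unfolding \<Psi>_def using measurable_sets[OF mult_measurable(1) m\<Phi>] by simp
  have cov: "E = (\<Union>\<gamma>\<in>L. \<Phi> \<gamma>)"
  proof
    show "E \<subseteq> (\<Union>\<gamma>\<in>L. \<Phi> \<gamma>)"
    proof
      fix x assume x: "x \<in> E"
      from Fd[of x] obtain \<gamma> f where "\<gamma> \<in> L" "f \<in> F" "x = h3_mult \<gamma> f" by blast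
      then have "h3_mult (h3_inv \<gamma>) x \<in> F" by (simp add: h3_assoc[symmetric])
      with x \<open>\<gamma> \<in> L\<close> show "x \<in> (\<Union>\<gamma>\<in>L. \<Phi> \<gamma>)" by (auto simp: \<Phi>_def)
    qed
  qed (auto simp: \<Phi>_def)
  have k\<Phi>: "\<gamma> = \<delta>" if g: "\<gamma> \<in> L" "\<delta> \<in> L" "x \<in> \<Phi> \<gamma>" "x \<in> \<Phi> \<delta>" for \<gamma> \<delta> x
  proof -
    have e1: "x = h3_mult \<gamma> (h3_mult (h3_inv \<gamma>) x)" by (simp add: h3_assoc[symmetric])
    have e2: "x = h3_mult \<delta> (h3_mult (h3_inv \<delta>) x)" by (simp add: h3_assoc[symmetric])
    have "h3_mult (h3_inv \<gamma>) x \<in> F" "h3_mult (h3_inv \<delta>) x \<in> F" using g by (auto simp: \<Phi>_def)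
    then show "\<gamma> = \<delta>" using Fd[of x] e1 e2 g(1,2) by blast
  qed
  have d\<Phi>: "disjoint_family_on \<Phi> L"
    unfolding disjoint_family_on_def using k\<Phi> by blast
  have k\<Psi>: "\<delta> = \<gamma>" if g: "\<gamma> \<in> L" "\<delta> \<in> L" "f \<in> \<Psi> \<gamma>" "f \<in> \<Psi> \<delta>" for \<gamma> \<delta> f
  proof -
    from g have a: "h3_mult \<gamma> f \<in> E" "h3_mult \<delta> f \<in> E" by (auto simp: \<Psi>_def \<Phi>_def)
    have eq: "h3_mult \<delta> f = h3_mult (h3_mult \<delta> (h3_inv \<gamma>)) (h3_mult \<gamma> f)"
      by (simp add: h3_assoc)
    have "h3_mult \<delta> (h3_inv \<gamma>) \<in> L" using g mult_in inv_in by blast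
    then have "h3_mult \<delta> (h3_inv \<gamma>) = h3_one" using inj[OF a(1)] a(2) eq by metis
    then have "h3_mult (h3_mult \<delta> (h3_inv \<gamma>)) \<gamma> = \<gamma>" by simp
    then show "\<delta> = \<gamma>" by (simp add: h3_assoc)
  qed
  have d\<Psi>: "disjoint_family_on \<Psi> L"
    unfolding disjoint_family_on_def using k\<Psi> by blast
  have sub: "(\<Union>\<gamma>\<in>L. \<Psi> \<gamma>) \<subseteq> F"
  proof clarify
    fix \<gamma> f assume "\<gamma> \<in> L" "f \<in> \<Psi> \<gamma>"
    then have "h3_mult (h3_inv \<gamma>) (h3_mult \<gamma> f) \<in> F" by (auto simp: \<Psi>_def \<Phi>_def)
    then show "f \<in> F" by (simp add: h3_assoc[symmetric])
  qed
  have eqm: "emeasure lborel (\<Psi> \<gamma>) = emeasure lborel (\<Phi> \<gamma>)" for \<gamma>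
    unfolding \<Psi>_def by (rule left_mult_emeasure[OF m\<Phi>])
  have "emeasure lborel E = emeasure lborel (\<Union>\<gamma>\<in>L. \<Phi> \<gamma>)" using cov by simp
  also have "\<dots> = (\<integral>\<^sup>+\<gamma>. emeasure lborel (\<Phi> \<gamma>) \<partial>count_space L)"
    by (rule emeasure_UN_countable) (auto simp: m\<Phi> countable_L d\<Phi>)
  also have "\<dots> = (\<integral>\<^sup>+\<gamma>. emeasure lborel (\<Psi> \<gamma>) \<partial>count_space L)"
    by (simp add: eqm)
  also have "\<dots> = emeasure lborel (\<Union>\<gamma>\<in>L. \<Psi> \<gamma>)"
    by (rule emeasure_UN_countable[symmetric]) (auto simp: m\<Psi> countable_L d\<Psi>)
  also have "\<dots> \<le> emeasure lborel F"
    by (rule emeasure_mono[OF sub]) (simp add: F)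
  finally show ?thesis .
qed

end

context lat begin

lemma collinear_functional:
  assumes col: "\<forall>g\<in>L. \<forall>h\<in>L. fst g * fst (snd h) - fst (snd g) * fst h = 0"
  obtains \<alpha> \<beta> :: real where "\<alpha>^2 + \<beta>^2 > 0" "\<And>\<gamma>. \<gamma> \<in> L \<Longrightarrow> \<alpha> * fst \<gamma> + \<beta> * fst (snd \<gamma>) = 0"
proof (cases "\<exists>g0\<in>L. fst g0 \<noteq> 0 \<or> fst (snd g0) \<noteq> 0")
  case True
  then obtain g0 where g0: "g0 \<in> L" "fst g0 \<noteq> 0 \<or> fst (snd g0) \<noteq> 0" by blast
  show ?thesis
  proof (rule that[of "- fst (snd g0)" "fst g0"])
    show "(- fst (snd g0))^2 + (fst g0)^2 > 0" using g0(2)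
      by (auto simp: add_pos_nonneg add_nonneg_pos)
    fix \<gamma> assume "\<gamma> \<in> L"
    then show "- fst (snd g0) * fst \<gamma> + fst g0 * fst (snd \<gamma>) = 0"
      using col g0(1) by (auto simp: algebra_simps)
  qed
next
  case False
  show ?thesis by (rule that[of 1 0]) (use False in auto)
qed

lemma noncollinear: "\<exists>g\<in>L. \<exists>h\<in>L. fst g * fst (snd h) - fst (snd g) * fst h \<noteq> 0"
proof (rule ccontr)
  assume "\<not> ?thesis"
  then have col: "\<forall>g\<in>L. \<forall>h\<in>L. fst g * fst (snd h) - fst (snd g) * fst h = 0" by blast
  obtain \<alpha> \<beta> :: real where K: "\<alpha>^2 + \<beta>^2 > 0"
    and van: "\<And>\<gamma>. \<gamma> \<in> L \<Longrightarrow> \<alpha> * fst \<gamma> + \<beta> * fst (snd \<gamma>) = 0"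
    using collinear_functional[OF col] by blast
  obtain e where e: "e > 0" "\<And>y. y \<in> L \<Longrightarrow> norm y < e \<Longrightarrow> y = h3_one" using isol by blast
  obtain F where F: "F \<in> sets borel" "emeasure lborel F < \<infinity>"
    "\<And>g. \<exists>!\<gamma>. \<gamma> \<in> L \<and> (\<exists>f\<in>F. g = h3_mult \<gamma> f)" using fund by blast
  define K where "K = \<alpha>^2 + \<beta>^2"
  define C where "C = \<bar>\<alpha>\<bar> + \<bar>\<beta>\<bar>"
  define \<rho> where "\<rho> = min 1 e / 9"
  define M where "M = (2 * C * \<rho> + 1) / K"
  define \<phi> where "\<phi> x = \<alpha> * fst x + \<beta> * fst (snd x)" for x :: h3
  define s where "s k = (real k * M * \<alpha>, real k * M * \<beta>, 0::real)" for k :: nat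
  define E0 where "E0 = {x::h3. \<bar>fst x\<bar> < \<rho> \<and> \<bar>fst (snd x)\<bar> < \<rho> \<and> \<bar>snd (snd x)\<bar> < \<rho>}"
  define Ek where "Ek k = (\<lambda>y. h3_mult y (h3_inv (s k))) -` E0" for k
  have Kp: "K > 0" using K by (simp add: K_def)
  have \<rho>p: "\<rho> > 0" and \<rho>1: "\<rho> \<le> 1" and \<rho>e: "9 * \<rho> \<le> e" using e by (auto simp: \<rho>_def)
  have C0: "C \<ge> 0" by (simp add: C_def)
  have MK: "M * K = 2 * C * \<rho> + 1" using Kp by (simp add: M_def)
  have \<phi>_mult: "\<phi> (h3_mult a b) = \<phi> a + \<phi> b" for a b
    by (simp add: \<phi>_def h3_mult_comp algebra_simps)
  have \<phi>_inv: "\<phi> (h3_inv a) = - \<phi> a" for a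
    by (simp add: \<phi>_def h3_inv_comp algebra_simps)
  have \<phi>_s: "\<phi> (s k) = real k * (M * K)" for k
    by (simp add: \<phi>_def s_def K_def power2_eq_square algebra_simps)
  have \<phi>_E0: "\<bar>\<phi> x\<bar> \<le> C * \<rho>" if "x \<in> E0" for x
  proof -
    have "\<bar>\<phi> x\<bar> \<le> \<bar>\<alpha>\<bar> * \<bar>fst x\<bar> + \<bar>\<beta>\<bar> * \<bar>fst (snd x)\<bar>"
      unfolding \<phi>_def by (metis abs_mult abs_triangle_ineq)
    also have "\<dots> \<le> \<bar>\<alpha>\<bar> * \<rho> + \<bar>\<beta>\<bar> * \<rho>"
      using that by (intro add_mono mult_left_mono) (auto simp: E0_def)
    finally show ?thesis by (simp add: C_def algebra_simps)
  qed
  have slab: "\<bar>\<phi> y - real k * (M * K)\<bar> \<le> C * \<rho>" if "y \<in> Ek k" for y k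
  proof -
    have "h3_mult y (h3_inv (s k)) \<in> E0" using that by (simp add: Ek_def)
    from \<phi>_E0[OF this] show ?thesis by (simp add: \<phi>_mult \<phi>_inv \<phi>_s)
  qed
  have same: "k = m" if "y \<in> Ek k" "y' \<in> Ek m" "\<phi> y = \<phi> y'" for y y' k m
  proof -
    have "\<bar>real k * (M * K) - real m * (M * K)\<bar> \<le> 2 * C * \<rho>"
      using slab[OF that(1)] slab[OF that(2)] that(3) by linarith
    moreover have MKp: "0 < M * K" using MK C0 \<rho>p by (simp add: add_nonneg_pos)
    ultimately have "\<bar>real k - real m\<bar> * (M * K) \<le> 2 * C * \<rho>"
      by (metis abs_mult abs_of_pos[OF MKp] left_diff_distrib)
    then have "\<bar>real k - real m\<bar> * (M * K) < 1 * (M * K)" using MK by linarith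
    then have "\<bar>real k - real m\<bar> < 1" using MKp mult_right_less_imp_less by fastforce
    then show "k = m" by linarith
  qed
  have mE0: "E0 \<in> sets borel"
    unfolding E0_def by (rule borel_open) (auto intro!: open_Collect_conj open_Collect_less continuous_intros)
  have mEk: "Ek k \<in> sets borel" for k
    unfolding Ek_def using measurable_sets[OF mult_measurable(2) mE0] by simp
  have mEk_eq: "emeasure lborel (Ek k) = ennreal (8 * \<rho>^3)" for k
    unfolding Ek_def using right_mult_emeasure[OF mE0] box_emeasure[OF \<rho>p] by (simp add: E0_def)
  have inj_small: "\<gamma> = h3_one" if "\<gamma> \<in> L" "x \<in> E0" "h3_mult \<gamma> x \<in> E0" for \<gamma> x
  proof -
    let ?x' = "h3_mult \<gamma> x"
    have g_eq: "\<gamma> = h3_mult ?x' (h3_inv x)" by (simp add: h3_assoc)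
    have comp: "h3_mult ?x' (h3_inv x) = (fst ?x' - fst x, fst (snd ?x') - fst (snd x),
        snd (snd ?x') - snd (snd x) - (fst ?x' - fst x) * fst (snd x))"
      by (simp add: h3_mult_comp h3_inv_comp algebra_simps)
    have b: "\<bar>fst x\<bar> < \<rho>" "\<bar>fst (snd x)\<bar> < \<rho>" "\<bar>snd (snd x)\<bar> < \<rho>"
      "\<bar>fst ?x'\<bar> < \<rho>" "\<bar>fst (snd ?x')\<bar> < \<rho>" "\<bar>snd (snd ?x')\<bar> < \<rho>"
      using that by (auto simp: E0_def simp del: h3_mult_comp)
    have p: "\<bar>(fst ?x' - fst x) * fst (snd x)\<bar> \<le> 2 * \<rho> * \<rho>"
      unfolding abs_mult using b by (intro mult_mono) auto
    have "norm \<gamma> \<le> \<bar>fst ?x' - fst x\<bar> + \<bar>fst (snd ?x') - fst (snd x)\<bar>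
        + \<bar>snd (snd ?x') - snd (snd x) - (fst ?x' - fst x) * fst (snd x)\<bar>"
      using norm3_le[of "h3_mult ?x' (h3_inv x)"] g_eq comp by (metis fst_conv snd_conv)
    also have "\<dots> < 6 * \<rho> + 2 * \<rho> * \<rho>" using b p by linarith
    also have "\<dots> \<le> 8 * \<rho>" using \<rho>p \<rho>1 by (simp add: mult_right_le_one_le)
    also have "\<dots> < e" using \<rho>e \<rho>p by linarith
    finally show ?thesis using e(2)[OF that(1)] by blast
  qed
  have pos: "0 < 8 * \<rho>^3" using \<rho>p by simp
  obtain r where r: "emeasure lborel F = ennreal r" "r \<ge> 0" using F(2)
    by (metis ennreal_cases less_irrefl top.extremum_strict) 
  define N where "N = nat \<lceil>r / (8 * \<rho>^3)\<rceil> + 1"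
  have NN: "real N * (8 * \<rho>^3) > r"
  proof -
    have "r / (8 * \<rho>^3) < real N" unfolding N_def by linarith
    then show ?thesis using pos by (simp add: divide_less_eq)
  qed
  define E where "E = (\<Union>k\<in>{..<N}. Ek k)"
  have mE: "E \<in> sets borel" unfolding E_def using mEk by auto
  have dE: "disjoint_family_on Ek {..<N}"
    unfolding disjoint_family_on_def using same by blast
  have "emeasure lborel E = (\<Sum>k<N. emeasure lborel (Ek k))"
    unfolding E_def by (rule sum_emeasure[symmetric]) (use mEk dE in auto)
  also have "\<dots> = ennreal (real N * (8 * \<rho>^3))"
    using pos by (simp add: mEk_eq ennreal_of_nat_eq_real_of_nat ennreal_mult[symmetric])
  finally have mEv: "emeasure lborel E = ennreal (real N * (8 * \<rho>^3))" .
  have "emeasure lborel E \<le> emeasure lborel F"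
  proof (rule minkowski[OF F(1) F(3) mE])
    fix x \<gamma> assume x: "x \<in> E" and g: "\<gamma> \<in> L" and gx: "h3_mult \<gamma> x \<in> E"
    from x obtain k where k: "x \<in> Ek k" by (auto simp: E_def)
    from gx obtain m where m: "h3_mult \<gamma> x \<in> Ek m" by (auto simp: E_def)
    have "\<phi> (h3_mult \<gamma> x) = \<phi> x" using van[OF g] unfolding \<phi>_mult by (simp add: \<phi>_def)
    then have km: "m = k" using same[OF m k] by simp
    let ?z = "h3_mult x (h3_inv (s k))"
    have z: "?z \<in> E0" using k by (simp add: Ek_def)
    have "h3_mult (h3_mult \<gamma> x) (h3_inv (s k)) \<in> E0" using m km by (simp add: Ek_def)
    then have "h3_mult \<gamma> ?z \<in> E0" by (simp add: h3_assoc)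
    then show "\<gamma> = h3_one" using inj_small[OF g z] by simp
  qed
  then have "real N * (8 * \<rho>^3) \<le> r" using mEv r by (simp add: ennreal_le_iff)
  with NN show False by simp
qed

end

lemma int_mult_in:
  fixes S :: "'a::real_vector set"
  assumes z: "0 \<in> S" and a: "\<And>x y. x \<in> S \<Longrightarrow> y \<in> S \<Longrightarrow> x + y \<in> S"
    and n: "\<And>x. x \<in> S \<Longrightarrow> - x \<in> S" and x: "x \<in> S"
  shows "real_of_int m *\<^sub>R x \<in> S"
proof -
  have nat: "real k *\<^sub>R x \<in> S" for k :: nat
    by (induction k) (auto simp: z a x scaleR_add_left)
  show ?thesis
  proof (cases "m \<ge> 0")
    case True
    then show ?thesis using nat[of "nat m"] by simp
  next
    case False
    then have "real_of_int m *\<^sub>R x = - (real (nat (- m)) *\<^sub>R x)" by simp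
    then show ?thesis using n[OF nat[of "nat (-m)"]] by simp
  qed
qed

lemma discrete_cyclic:
  fixes G :: "real set"
  assumes z: "0 \<in> G" and a: "\<And>x y. x \<in> G \<Longrightarrow> y \<in> G \<Longrightarrow> x + y \<in> G"
    and n: "\<And>x. x \<in> G \<Longrightarrow> - x \<in> G" and nz: "t0 \<in> G" "t0 \<noteq> 0"
    and e: "e > 0" and gap: "\<And>t. t \<in> G \<Longrightarrow> \<bar>t\<bar> < e \<Longrightarrow> t = 0"
  shows "\<exists>\<xi>>0. G = {of_int m * \<xi> | m. True}"
proof -
  define Pos where "Pos = {t \<in> G. t > 0}"
  have ne: "Pos \<noteq> {}"
  proof (cases "t0 > 0")
    case True then show ?thesis using nz by (auto simp: Pos_def)
  next
    case False then have "- t0 > 0" using nz by simp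
    then show ?thesis using n[OF nz(1)] by (auto simp: Pos_def)
  qed
  have bdd: "bdd_below Pos" by (rule bdd_belowI[of _ 0]) (auto simp: Pos_def)
  have ge: "t \<ge> e" if "t \<in> Pos" for t
    using gap[of t] that by (force simp: Pos_def)
  define \<xi> where "\<xi> = Inf Pos"
  have \<xi>e: "\<xi> \<ge> e" unfolding \<xi>_def by (rule cInf_greatest[OF ne ge])
  have low: "\<xi> \<le> t" if "t \<in> Pos" for t unfolding \<xi>_def by (rule cInf_lower[OF that bdd])
  have diffin: "x - y \<in> G" if "x \<in> G" "y \<in> G" for x y
    using a[OF that(1) n[OF that(2)]] by simp
  have \<xi>G: "\<xi> \<in> Pos"
  proof (rule ccontr)
    assume nin: "\<xi> \<notin> Pos"
    have "Inf Pos < \<xi> + e" using e by (simp add: \<xi>_def)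
    then obtain t1 where t1: "t1 \<in> Pos" "t1 < \<xi> + e" using cInf_less_iff[OF ne bdd] by blast
    have "\<xi> < t1" using low[OF t1(1)] nin t1(1) by (cases "\<xi> = t1") auto
    then have "Inf Pos < t1" by (simp add: \<xi>_def)
    then obtain t2 where t2: "t2 \<in> Pos" "t2 < t1" using cInf_less_iff[OF ne bdd] by blast
    have "\<xi> \<le> t2" using low[OF t2(1)] .
    have "t1 - t2 \<in> G" using diffin t1(1) t2(1) by (auto simp: Pos_def)
    moreover have "\<bar>t1 - t2\<bar> < e" using t1 t2 \<open>\<xi> \<le> t2\<close> by simp
    ultimately have "t1 - t2 = 0" by (rule gap)
    with t2 show False by simp
  qed
  have \<xi>p: "\<xi> > 0" using \<xi>G by (simp add: Pos_def)
  have mult: "of_int m * \<xi> \<in> G" for m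
    using int_mult_in[OF z a n, of \<xi> m] \<xi>G by (simp add: Pos_def)
  have "G = {of_int m * \<xi> | m. True}"
  proof
    show "G \<subseteq> {of_int m * \<xi> | m. True}"
    proof
      fix t assume t: "t \<in> G"
      define m where "m = \<lfloor>t / \<xi>\<rfloor>"
      have r: "t - of_int m * \<xi> \<in> G" using diffin[OF t mult] .
      have "of_int m \<le> t / \<xi>" by (simp add: m_def)
      then have "of_int m * \<xi> \<le> t" using \<xi>p by (simp add: le_divide_eq)
      then have r0: "0 \<le> t - of_int m * \<xi>" by simp
      have "t / \<xi> < of_int m + 1" unfolding m_def by (rule real_of_int_floor_add_one_gt)
      then have "t < (of_int m + 1) * \<xi>" using \<xi>p by (simp add: divide_less_eq)
      then have r1: "t - of_int m * \<xi> < \<xi>" by (simp add: algebra_simps)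
      have "t - of_int m * \<xi> = 0"
      proof (rule ccontr)
        assume "t - of_int m * \<xi> \<noteq> 0"
        then have "t - of_int m * \<xi> \<in> Pos" using r r0 by (auto simp: Pos_def)
        then show False using low r1 by fastforce
      qed
      then show "t \<in> {of_int m * \<xi> | m. True}" by auto
    qed
  qed (use mult in auto)
  with \<xi>p show ?thesis by blast
qed

lemma xi_eq:
  assumes "\<xi> > 0" "{t. h3_c t \<in> L} = {of_int m * \<xi> | m. True}"
  shows "xi L = \<xi>"
  unfolding xi_def
proof (rule the_equality)
  show "\<xi> > 0 \<and> {t. h3_c t \<in> L} = {of_int m * \<xi> | m. True}" using assms by simp
  fix x assume x: "x > 0 \<and> {t. h3_c t \<in> L} = {of_int m * x | m. True}"
  have "\<xi> \<in> {of_int m * x | m. True}" using assms(2) x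
    by (metis (mono_tags, lifting) mem_Collect_eq mult_1 of_int_1)
  then obtain a where a: "\<xi> = of_int a * x" by auto
  have "x \<in> {of_int m * \<xi> | m. True}" using assms(2) x
    by (metis (mono_tags, lifting) mem_Collect_eq mult_1 of_int_1)
  then obtain b where b: "x = of_int b * \<xi>" by auto
  have "a > 0" using a x assms(1) by (metis of_int_0_less_iff zero_less_mult_pos2)
  then have "(1::real) \<le> of_int a" by simp
  then have "1 * x \<le> of_int a * x" using x by (intro mult_right_mono) auto
  then have "\<xi> \<ge> x" using a by simp
  have "b > 0" using b x assms(1) by (metis of_int_0_less_iff zero_less_mult_pos2)
  then have "(1::real) \<le> of_int b" by simp
  then have "1 * \<xi> \<le> of_int b * \<xi>" using assms(1) by (intro mult_right_mono) auto
  then have "x \<ge> \<xi>" using b by simp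
  with \<open>\<xi> \<ge> x\<close> show "x = \<xi>" by simp
qed

definition det2 :: "real^2 \<Rightarrow> real^2 \<Rightarrow> real" where
  "det2 u v = u$1 * v$2 - u$2 * v$1"

lemma h3_p_comp[simp]: "h3_p g $ 1 = fst g" "h3_p g $ 2 = fst (snd g)"
  by (simp_all add: h3_p_def)

lemma h3_p_mult: "h3_p (h3_mult a b) = h3_p a + h3_p b"
  by (simp add: vec_eq_iff forall_2 h3_mult_comp)
lemma h3_p_inv: "h3_p (h3_inv a) = - h3_p a"
  by (simp add: vec_eq_iff forall_2 h3_inv_comp)
lemma h3_p_one: "h3_p h3_one = 0"
  by (simp add: vec_eq_iff forall_2 h3_one_def)

lemma det2_p: "det2 (h3_p g) (h3_p h) = fst g * fst (snd h) - fst (snd g) * fst h"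
  by (simp add: det2_def)

context lat begin

lemma comm_in: "g \<in> L \<Longrightarrow> h \<in> L \<Longrightarrow> h3_c (fst g * fst (snd h) - fst (snd g) * fst h) \<in> L"
  by (metis h3_comm mult_in inv_in)

lemma center: "\<exists>\<xi>>0. {t. h3_c t \<in> L} = {of_int m * \<xi> | m. True}"
proof -
  obtain g h where gh: "g \<in> L" "h \<in> L" "fst g * fst (snd h) - fst (snd g) * fst h \<noteq> 0"
    using noncollinear by blast
  obtain e where e: "e > 0" "\<And>y. y \<in> L \<Longrightarrow> norm y < e \<Longrightarrow> y = h3_one" using isol by blast
  show ?thesis
  proof (rule discrete_cyclic[OF _ _ _ _ gh(3) e(1)])
    show "0 \<in> {t. h3_c t \<in> L}" using one_in by (simp add: h3_c_zero)
    show "x + y \<in> {t. h3_c t \<in> L}" if "x \<in> {t. h3_c t \<in> L}" "y \<in> {t. h3_c t \<in> L}" for x y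
      using mult_in[of "h3_c x" "h3_c y"] that by (simp add: h3_c_mult)
    show "- x \<in> {t. h3_c t \<in> L}" if "x \<in> {t. h3_c t \<in> L}" for x
      using inv_in[of "h3_c x"] that by (simp add: h3_c_inv)
    show "fst g * fst (snd h) - fst (snd g) * fst h \<in> {t. h3_c t \<in> L}"
      using comm_in[OF gh(1,2)] by simp
    fix t assume t: "t \<in> {t. h3_c t \<in> L}" "\<bar>t\<bar> < e"
    have "norm (h3_c t) \<le> \<bar>t\<bar>" using norm3_le[of "h3_c t"] by (simp add: h3_c_def)
    then have "h3_c t = h3_one" using e(2)[of "h3_c t"] t by simp
    then show "t = 0" by (simp add: h3_c_def h3_one_def)
  qed
qed

lemma P_sub: "0 \<in> h3_p ` L" "\<And>x y. x \<in> h3_p ` L \<Longrightarrow> y \<in> h3_p ` L \<Longrightarrow> x + y \<in> h3_p ` L"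
  "\<And>x. x \<in> h3_p ` L \<Longrightarrow> - x \<in> h3_p ` L"
proof -
  show "0 \<in> h3_p ` L" using one_in h3_p_one by (metis image_eqI)
  show "x + y \<in> h3_p ` L" if xy: "x \<in> h3_p ` L" "y \<in> h3_p ` L" for x y
  proof -
    obtain a b where "a \<in> L" "b \<in> L" "x = h3_p a" "y = h3_p b" using xy by blast
    then show ?thesis using mult_in[of a b] h3_p_mult[of a b] by (metis image_eqI)
  qed
  show "- x \<in> h3_p ` L" if xy: "x \<in> h3_p ` L" for x
  proof -
    obtain a where "a \<in> L" "x = h3_p a" using xy by blast
    then show ?thesis using inv_in[of a] h3_p_inv[of a] by (metis image_eqI)
  qed
qed

lemma P_int: "x \<in> h3_p ` L \<Longrightarrow> real_of_int m *\<^sub>R x \<in> h3_p ` L"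
  by (rule int_mult_in[OF P_sub])

lemma p_lattice: "\<exists>A. invertible A \<and> h3_p ` L = (\<lambda>z. A *v z) ` Zvec"
proof -
  obtain \<xi> where \<xi>: "\<xi> > 0" "{t. h3_c t \<in> L} = {of_int m * \<xi> | m. True}" using center by blast
  let ?P = "h3_p ` L"
  have detin: "\<exists>m::int. det2 u v = of_int m * \<xi>" if uv: "u \<in> ?P" "v \<in> ?P" for u v
  proof -
    obtain g h where "g \<in> L" "h \<in> L" "u = h3_p g" "v = h3_p h" using uv by blast
    then have "det2 u v \<in> {t. h3_c t \<in> L}" using comm_in by (simp add: det2_p)
    then show ?thesis using \<xi>(2) by auto
  qed
  define Ns where "Ns = {n::nat. n > 0 \<and> (\<exists>u\<in>?P. \<exists>v\<in>?P. \<bar>det2 u v\<bar> = real n * \<xi>)}"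
  have inNs: "nat \<bar>m\<bar> \<in> Ns" if "u \<in> ?P" "v \<in> ?P" "det2 u v = of_int m * \<xi>" "det2 u v \<noteq> 0" for u v m
  proof -
    have "m \<noteq> 0" using that by auto
    moreover have "\<bar>det2 u v\<bar> = real (nat \<bar>m\<bar>) * \<xi>" using that(3) \<xi>(1) by (simp add: abs_mult)
    ultimately show ?thesis using that(1,2) by (auto simp: Ns_def)
  qed
  obtain g h where gh: "g \<in> L" "h \<in> L" "fst g * fst (snd h) - fst (snd g) * fst h \<noteq> 0"
    using noncollinear by blast
  have "\<exists>n. n \<in> Ns"
  proof -
    have u: "h3_p g \<in> ?P" "h3_p h \<in> ?P" using gh by auto
    obtain m where "det2 (h3_p g) (h3_p h) = of_int m * \<xi>" using detin[OF u] by blast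
    then show ?thesis using inNs[OF u] gh(3) by (auto simp: det2_p)
  qed
  define n0 where "n0 = (LEAST n. n \<in> Ns)"
  have n0: "n0 \<in> Ns" unfolding n0_def using \<open>\<exists>n. n \<in> Ns\<close> by (rule LeastI_ex)
  then obtain u1 u2 where u: "u1 \<in> ?P" "u2 \<in> ?P" "\<bar>det2 u1 u2\<bar> = real n0 * \<xi>" "n0 > 0"
    by (auto simp: Ns_def)
  define Dd where "Dd = det2 u1 u2"
  have Dd0: "Dd \<noteq> 0" using u \<xi>(1) by (auto simp: Dd_def)
  have minimal: "\<bar>Dd\<bar> \<le> \<bar>det2 u v\<bar>" if uv: "u \<in> ?P" "v \<in> ?P" "det2 u v \<noteq> 0" for u v
  proof -
    obtain m where m: "det2 u v = of_int m * \<xi>" using detin[OF uv(1,2)] by blast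
    have "n0 \<le> nat \<bar>m\<bar>" unfolding n0_def by (rule Least_le, rule inNs[OF uv(1,2) m uv(3)])
    then have "real n0 * \<xi> \<le> real (nat \<bar>m\<bar>) * \<xi>" using \<xi>(1) by (intro mult_right_mono) auto
    then show ?thesis using m u(3) \<xi>(1) by (simp add: Dd_def abs_mult)
  qed
  have det2_lin1: "det2 (v - a *\<^sub>R u1 - b *\<^sub>R u2) u2 = det2 v u2 - a * Dd" for v a b
    by (simp add: det2_def Dd_def algebra_simps)
  have det2_lin2: "det2 u1 (v - a *\<^sub>R u1 - b *\<^sub>R u2) = det2 u1 v - b * Dd" for v a b
    by (simp add: det2_def Dd_def algebra_simps)
  have frac: "x = of_int \<lfloor>x\<rfloor>" if "w \<in> ?P" "det w = (x - of_int \<lfloor>x\<rfloor>) * Dd" "\<bar>det w\<bar> \<ge> \<bar>Dd\<bar> \<or> det w = 0"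
    for x w and det :: "real^2 \<Rightarrow> real"
  proof (rule ccontr)
    assume ne: "x \<noteq> of_int \<lfloor>x\<rfloor>"
    have f0: "0 < x - of_int \<lfloor>x\<rfloor>" using ne by (simp add: less_le)
    have f1: "x - of_int \<lfloor>x\<rfloor> < 1" by linarith
    have "\<bar>det w\<bar> = (x - of_int \<lfloor>x\<rfloor>) * \<bar>Dd\<bar>" using that(2) f0 by (simp add: abs_mult)
    moreover have "(x - of_int \<lfloor>x\<rfloor>) * \<bar>Dd\<bar> < 1 * \<bar>Dd\<bar>" using f1 Dd0 by (intro mult_strict_right_mono) auto
    moreover have "(x - of_int \<lfloor>x\<rfloor>) * \<bar>Dd\<bar> > 0" using f0 Dd0 by simp
    ultimately show False using that(3) by auto
  qed
  have decomp: "\<exists>a b::int. v = real_of_int a *\<^sub>R u1 + real_of_int b *\<^sub>R u2" if v: "v \<in> ?P" for v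
  proof -
    define \<alpha> where "\<alpha> = det2 v u2 / Dd"
    define \<beta> where "\<beta> = det2 u1 v / Dd"
    have e1: "Dd * v$1 = det2 v u2 * u1$1 + det2 u1 v * u2$1"
      by (simp add: det2_def Dd_def algebra_simps)
    have e2: "Dd * v$2 = det2 v u2 * u1$2 + det2 u1 v * u2$2"
      by (simp add: det2_def Dd_def algebra_simps)
    have c1: "v$1 = \<alpha> * u1$1 + \<beta> * u2$1"
    proof -
      have "\<alpha> * u1$1 + \<beta> * u2$1 = (det2 v u2 * u1$1 + det2 u1 v * u2$1) / Dd"
        by (simp add: \<alpha>_def \<beta>_def add_divide_distrib)
      also have "\<dots> = v$1" unfolding e1[symmetric] using Dd0 by simp
      finally show ?thesis by simp
    qed
    have c2: "v$2 = \<alpha> * u1$2 + \<beta> * u2$2"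
    proof -
      have "\<alpha> * u1$2 + \<beta> * u2$2 = (det2 v u2 * u1$2 + det2 u1 v * u2$2) / Dd"
        by (simp add: \<alpha>_def \<beta>_def add_divide_distrib)
      also have "\<dots> = v$2" unfolding e2[symmetric] using Dd0 by simp
      finally show ?thesis by simp
    qed
    have v_eq: "v = \<alpha> *\<^sub>R u1 + \<beta> *\<^sub>R u2"
      using c1 c2 by (simp add: vec_eq_iff forall_2)
    define w where "w = v - of_int \<lfloor>\<alpha>\<rfloor> *\<^sub>R u1 - of_int \<lfloor>\<beta>\<rfloor> *\<^sub>R u2"
    have wP: "w \<in> ?P"
    proof -
      have "- (of_int \<lfloor>\<alpha>\<rfloor> *\<^sub>R u1) \<in> ?P" "- (of_int \<lfloor>\<beta>\<rfloor> *\<^sub>R u2) \<in> ?P"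
        using P_sub(3) P_int u(1,2) by blast+
      then show ?thesis unfolding w_def using P_sub(2) v by (metis diff_conv_add_uminus)
    qed
    have d1: "det2 w u2 = (\<alpha> - of_int \<lfloor>\<alpha>\<rfloor>) * Dd"
      unfolding w_def det2_lin1 using Dd0 by (simp add: \<alpha>_def algebra_simps)
    have d2: "det2 u1 w = (\<beta> - of_int \<lfloor>\<beta>\<rfloor>) * Dd"
      unfolding w_def det2_lin2 using Dd0 by (simp add: \<beta>_def algebra_simps)
    have "\<alpha> = of_int \<lfloor>\<alpha>\<rfloor>"
      by (rule frac[OF wP, of "\<lambda>w. det2 w u2"]) (use d1 minimal[OF wP u(2)] in auto)
    moreover have "\<beta> = of_int \<lfloor>\<beta>\<rfloor>"
      by (rule frac[OF wP, of "\<lambda>w. det2 u1 w"]) (use d2 minimal[OF u(1) wP] in auto)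
    ultimately show ?thesis using v_eq by metis
  qed
  define A :: "real^2^2" where "A = (\<chi> i j. if j = 1 then u1$i else u2$i)"
  have Av: "A *v z = z$1 *\<^sub>R u1 + z$2 *\<^sub>R u2" for z
    by (simp add: vec_eq_iff forall_2 A_def matrix_vector_mult_def sum_2 mult.commute)
  have "det A = Dd" by (simp add: det_2 A_def Dd_def det2_def mult.commute)
  then have invA: "invertible A" using Dd0 by (simp add: invertible_det_nz)
  have "?P = (\<lambda>z. A *v z) ` Zvec"
  proof
    show "?P \<subseteq> (\<lambda>z. A *v z) ` Zvec"
    proof
      fix v assume "v \<in> ?P"
      then obtain a b :: int where ab: "v = real_of_int a *\<^sub>R u1 + real_of_int b *\<^sub>R u2"
        using decomp by blast
      have "vector [real_of_int a, real_of_int b] \<in> Zvec" by (simp add: Zvec_def forall_2)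
      moreover have "v = A *v vector [real_of_int a, real_of_int b]" using ab by (simp add: Av)
      ultimately show "v \<in> (\<lambda>z. A *v z) ` Zvec" by blast
    qed
    show "(\<lambda>z. A *v z) ` Zvec \<subseteq> ?P"
    proof clarify
      fix z assume "z \<in> Zvec"
      then have "z$1 \<in> \<int>" "z$2 \<in> \<int>" by (auto simp: Zvec_def)
      then obtain a b where "z$1 = real_of_int a" "z$2 = real_of_int b" by (metis Ints_cases)
      then show "A *v z \<in> ?P" using P_int u(1,2) P_sub(2) by (simp add: Av)
    qed
  qed
  with invA show ?thesis by blast
qed

end

lemma minv:
  fixes M :: "real^2^2"
  assumes "invertible M"
  shows "M ** matrix_inv M = mat 1" "matrix_inv M ** M = mat 1"
proof -
  have "\<exists>A'. M ** A' = mat 1 \<and> A' ** M = mat 1" using assms by (simp add: invertible_def)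
  then have "M ** matrix_inv M = mat 1 \<and> matrix_inv M ** M = mat 1"
    unfolding matrix_inv_def by (rule someI_ex)
  then show "M ** matrix_inv M = mat 1" "matrix_inv M ** M = mat 1" by auto
qed

lemma minv_v:
  fixes M :: "real^2^2"
  assumes "invertible M"
  shows "M *v (matrix_inv M *v x) = x" "matrix_inv M *v (M *v x) = x"
  by (simp_all add: matrix_vector_mul_assoc minv[OF assms])

lemma minv_inv: "invertible (M::real^2^2) \<Longrightarrow> invertible (matrix_inv M)"
  using minv unfolding invertible_def by blast

lemma det_minv: "invertible (M::real^2^2) \<Longrightarrow> det (matrix_inv M) = 1 / det M"
proof -
  assume M: "invertible M"
  have "det M * det (matrix_inv M) = 1" using det_mul[of M "matrix_inv M"] minv(1)[OF M] by simp
  then have "det M \<noteq> 0" by auto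
  with \<open>det M * det (matrix_inv M) = 1\<close> show ?thesis by (simp add: eq_divide_eq mult.commute)
qed

definition e1 :: "real^2" where "e1 = vector [1, 0]"
definition e2 :: "real^2" where "e2 = vector [0, 1]"

lemma e_Zvec: "e1 \<in> Zvec" "e2 \<in> Zvec" by (simp_all add: e1_def e2_def Zvec_def forall_2)

lemma mv_e: "(M *v e1) $ i = M $ i $ 1" "(M *v e2) $ i = M $ i $ 2"
  by (simp_all add: e1_def e2_def matrix_vector_mult_def sum_2)

lemma det_cols: "det (M::real^2^2) = det2 (M *v e1) (M *v e2)"
  by (simp add: det_2 det2_def mv_e)

lemma det2_mult: "det2 (C *v a) (C *v b) = det C * det2 a b"
  by (simp add: det_2 det2_def matrix_vector_mult_def sum_2 algebra_simps)

lemma int_matrix_cols: "M *v e1 \<in> Zvec \<Longrightarrow> M *v e2 \<in> Zvec \<Longrightarrow> int_matrix M"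
  unfolding int_matrix_def Zvec_def by (auto simp: mv_e forall_2)

lemma inner2: "(v::real^2) \<bullet> w = v$1 * w$1 + v$2 * w$2"
  by (simp add: inner_vec_def sum_2)

lemma inner_transp: "(v::real^2) \<bullet> ((A::real^2^2) *v w) = (transpose A *v v) \<bullet> w"
  by (simp add: inner2 matrix_vector_mult_def transpose_def sum_2 algebra_simps del: transpose_matrix_vector)

lemma Zvec_inner: "z \<in> Zvec \<Longrightarrow> w \<in> Zvec \<Longrightarrow> z \<bullet> w \<in> \<int>"
  by (simp add: inner2 Zvec_def)

lemma dual_char:
  fixes A :: "real^2^2"
  assumes A: "invertible A"
  shows "(\<lambda>z. matrix_inv (transpose A) *v z) ` Zvec = {v. \<forall>q\<in>(\<lambda>z. A *v z) ` Zvec. v \<bullet> q \<in> \<int>}"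
proof -
  let ?B = "matrix_inv (transpose A)"
  have tA: "invertible (transpose A)" using A by (rule transpose_invertible)
  show ?thesis
  proof
    show "(\<lambda>z. ?B *v z) ` Zvec \<subseteq> {v. \<forall>q\<in>(\<lambda>z. A *v z) ` Zvec. v \<bullet> q \<in> \<int>}"
    proof clarify
      fix z w assume z: "z \<in> Zvec" and w: "w \<in> Zvec"
      have "(?B *v z) \<bullet> (A *v w) = z \<bullet> w"
        by (simp only: inner_transp minv_v[OF tA])
      then show "(?B *v z) \<bullet> (A *v w) \<in> \<int>" using Zvec_inner[OF z w] by simp
    qed
    show "{v. \<forall>q\<in>(\<lambda>z. A *v z) ` Zvec. v \<bullet> q \<in> \<int>} \<subseteq> (\<lambda>z. ?B *v z) ` Zvec"
    proof clarify
      fix v assume v: "\<forall>q\<in>(\<lambda>z. A *v z) ` Zvec. v \<bullet> q \<in> \<int>"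
      let ?z = "transpose A *v v"
      have "?z \<bullet> w \<in> \<int>" if "w \<in> Zvec" for w
        using v that by (simp only: inner_transp[symmetric]) blast
      then have "?z \<bullet> e1 \<in> \<int>" "?z \<bullet> e2 \<in> \<int>" using e_Zvec by blast+
      then have "?z \<in> Zvec" by (simp add: Zvec_def forall_2 inner2 e1_def e2_def del: transpose_matrix_vector)
      moreover have "v = ?B *v ?z" by (simp only: minv_v[OF tA])
      ultimately show "v \<in> (\<lambda>z. ?B *v z) ` Zvec" by blast
    qed
  qed
qed

lemma (in lat) det_in:
  assumes "{t. h3_c t \<in> L} = {of_int m * \<xi> | m. True}" "h3_p ` L = (\<lambda>z. A *v z) ` Zvec"
  shows "\<exists>k::int. det A = of_int k * \<xi>"
proof -
  have "A *v e1 \<in> h3_p ` L" "A *v e2 \<in> h3_p ` L" using assms(2) e_Zvec by auto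
  then obtain g h where gh: "g \<in> L" "h \<in> L" "A *v e1 = h3_p g" "A *v e2 = h3_p h" by blast
  have "det A = fst g * fst (snd h) - fst (snd g) * fst h"
    by (simp add: det_cols gh(3,4) det2_p)
  then have "det A \<in> {t. h3_c t \<in> L}" using comm_in[OF gh(1,2)] by simp
  then show ?thesis using assms(1) by auto
qed

theorem proposition5p4:
  fixes \<Gamma> :: "nat \<Rightarrow> h3 set"
  assumes "\<And>j. h3_lattice (\<Gamma> j)"
    and "\<And>j. \<Gamma> (Suc j) \<subseteq> \<Gamma> j"
  shows "xi_Gamma \<Gamma> \<subseteq> tau (S_Gamma \<Gamma>)"
proof -
  have LJ: "lat (\<Gamma> j)" for j by (simp add: lat_def assms(1))
  define P where "P j = h3_p ` \<Gamma> j" for j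
  define AA where "AA j = (SOME A :: real^2^2. invertible A \<and> P j = (\<lambda>z. A *v z) ` Zvec)" for j
  have AA: "invertible (AA j) \<and> P j = (\<lambda>z. AA j *v z) ` Zvec" for j
    unfolding AA_def P_def by (rule someI_ex, rule lat.p_lattice[OF LJ])
  define BB where "BB j = matrix_inv (transpose (AA j))" for j
  define D where "D j = dual_lattice (P j)" for j
  have D_eq: "D j = (\<lambda>z. BB j *v z) ` Zvec" for j
    by (simp add: D_def dual_lattice_def Let_def AA_def BB_def)
  have Dchar: "D j = {v. \<forall>q\<in>P j. v \<bullet> q \<in> \<int>}" for j
    using dual_char[of "AA j"] AA[of j] by (simp add: D_eq BB_def)
  have Dsuc: "D j \<subseteq> D (Suc j)" for j
  proof -
    have "P (Suc j) \<subseteq> P j" unfolding P_def using assms(2) by (rule image_mono)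
    then show ?thesis unfolding Dchar by blast
  qed
  have Dmono: "j \<le> j' \<Longrightarrow> D j \<subseteq> D j'" for j j'
    by (rule lift_Suc_mono_le[of D, OF Dsuc])
  have S_eq: "S_Gamma \<Gamma> = (\<Union>j. D j)" by (simp add: S_Gamma_def D_def P_def)
  have invBB: "invertible (BB j)" for j
    unfolding BB_def by (rule minv_inv, rule transpose_invertible) (use AA in blast)
  define As where "As j = matrix_inv (BB j) ** BB 0" for j
  have Asv: "As j *v x = matrix_inv (BB j) *v (BB 0 *v x)" for j x
    by (simp add: As_def matrix_vector_mul_assoc)
  have invAs: "invertible (As j)" for j
    unfolding As_def by (rule invertible_mult[OF minv_inv[OF invBB] invBB])
  have Q: "(\<lambda>z. matrix_inv (As j) *v z) ` Zvec = {x. BB 0 *v x \<in> D j}" for j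
  proof
    show "(\<lambda>z. matrix_inv (As j) *v z) ` Zvec \<subseteq> {x. BB 0 *v x \<in> D j}"
    proof clarify
      fix z assume z: "z \<in> Zvec"
      let ?x = "matrix_inv (As j) *v z"
      have "As j *v ?x = z" by (rule minv_v(1)[OF invAs])
      then have "matrix_inv (BB j) *v (BB 0 *v ?x) = z" by (simp only: Asv)
      then have "BB 0 *v ?x = BB j *v z" by (metis minv_v(1)[OF invBB])
      then show "BB 0 *v ?x \<in> D j" using z by (simp add: D_eq)
    qed
    show "{x. BB 0 *v x \<in> D j} \<subseteq> (\<lambda>z. matrix_inv (As j) *v z) ` Zvec"
    proof clarify
      fix x assume "BB 0 *v x \<in> D j"
      then obtain z where z: "z \<in> Zvec" "BB 0 *v x = BB j *v z" by (auto simp: D_eq)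
      have "As j *v x = z" by (simp only: Asv z(2) minv_v(2)[OF invBB])
      then have "x = matrix_inv (As j) *v z" by (metis minv_v(2)[OF invAs])
      with z(1) show "x \<in> (\<lambda>z. matrix_inv (As j) *v z) ` Zvec" by blast
    qed
  qed
  have rep: "off_rat_rep (S_Gamma \<Gamma>) (BB 0) As"
    unfolding off_rat_rep_def
  proof (intro conjI allI)
    show "invertible (BB 0)" by (rule invBB)
    fix j
    show "invertible (As j)" by (rule invAs)
    show "int_matrix (As j)"
    proof (rule int_matrix_cols)
      show "As j *v e1 \<in> Zvec"
      proof -
        have "BB 0 *v e1 \<in> D j" using Dmono[of 0 j] e_Zvec by (auto simp: D_eq)
        then obtain y where y: "y \<in> Zvec" "BB 0 *v e1 = BB j *v y" by (auto simp: D_eq)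
        then show ?thesis by (simp only: Asv y(2) minv_v(2)[OF invBB])
      qed
      show "As j *v e2 \<in> Zvec"
      proof -
        have "BB 0 *v e2 \<in> D j" using Dmono[of 0 j] e_Zvec by (auto simp: D_eq)
        then obtain y where y: "y \<in> Zvec" "BB 0 *v e2 = BB j *v y" by (auto simp: D_eq)
        then show ?thesis by (simp only: Asv y(2) minv_v(2)[OF invBB])
      qed
    qed
    show "(\<lambda>z. matrix_inv (As j) *v z) ` Zvec \<subseteq> (\<lambda>z. matrix_inv (As (Suc j)) *v z) ` Zvec"
      unfolding Q using Dsuc by blast
  next
    show "S_Gamma \<Gamma> = (\<lambda>q. BB 0 *v q) ` (\<Union>j. (\<lambda>z. matrix_inv (As j) *v z) ` Zvec)"
      unfolding S_eq Q
    proof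
      show "(\<Union>j. D j) \<subseteq> (\<lambda>q. BB 0 *v q) ` (\<Union>j. {x. BB 0 *v x \<in> D j})"
      proof
        fix v assume "v \<in> (\<Union>j. D j)"
        then obtain j where vj: "v \<in> D j" by blast
        have ve: "v = BB 0 *v (matrix_inv (BB 0) *v v)" by (simp only: minv_v(1)[OF invBB])
        have "matrix_inv (BB 0) *v v \<in> (\<Union>j. {x. BB 0 *v x \<in> D j})"
          using vj ve by auto
        with ve show "v \<in> (\<lambda>q. BB 0 *v q) ` (\<Union>j. {x. BB 0 *v x \<in> D j})" by (rule image_eqI)
      qed
    qed auto
  qed
  have ex: "\<exists>T. \<exists>A As. off_rat_rep (S_Gamma \<Gamma>) A As \<and> T = (\<Union>j. {det A / det (As j) * of_int m | m. True})"
    using rep by blast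
  have "\<exists>A As. off_rat_rep (S_Gamma \<Gamma>) A As \<and> tau (S_Gamma \<Gamma>) = (\<Union>j. {det A / det (As j) * of_int m | m. True})"
    unfolding tau_def by (rule someI_ex[OF ex])
  then obtain A' As' where rep': "off_rat_rep (S_Gamma \<Gamma>) A' As'"
    and tau_eq: "tau (S_Gamma \<Gamma>) = (\<Union>j. {det A' / det (As' j) * of_int m | m. True})"
    by (elim exE conjE)
  define Q' where "Q' i = (\<lambda>z. matrix_inv (As' i) *v z) ` Zvec" for i
  have invAs': "invertible (As' i)" for i using rep' by (simp add: off_rat_rep_def)
  have Q'suc: "Q' i \<subseteq> Q' (Suc i)" for i using rep' by (simp add: off_rat_rep_def Q'_def)
  have Q'mono: "i \<le> i' \<Longrightarrow> Q' i \<subseteq> Q' i'" for i i'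
    by (rule lift_Suc_mono_le[of Q', OF Q'suc])
  have S'_eq: "S_Gamma \<Gamma> = (\<lambda>q. A' *v q) ` (\<Union>i. Q' i)" using rep' by (simp add: off_rat_rep_def Q'_def)
  show ?thesis
  proof
    fix x assume "x \<in> xi_Gamma \<Gamma>"
    then obtain j m where x: "x = of_int m / xi (\<Gamma> j)" by (auto simp: xi_Gamma_def)
    obtain \<xi> where \<xi>: "\<xi> > 0" "{t. h3_c t \<in> \<Gamma> j} = {of_int m * \<xi> | m. True}"
      using lat.center[OF LJ] by blast
    have xij: "xi (\<Gamma> j) = \<xi>" by (rule xi_eq[OF \<xi>])
    obtain k where k: "det (AA j) = of_int k * \<xi>"
      using lat.det_in[OF LJ \<xi>(2), of "AA j"] AA[of j] by (auto simp: P_def)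
    have dA0: "det (AA j) \<noteq> 0" using AA[of j] by (simp add: invertible_det_nz)
    have tA: "invertible (transpose (AA j))" using AA[of j] transpose_invertible by blast
    have dB: "det (BB j) = 1 / det (AA j)"
      unfolding BB_def det_minv[OF tA] det_transpose ..
    have k0: "(of_int k :: real) \<noteq> 0" using dA0 k by auto
    have "of_int k * det (BB j) = of_int k / (of_int k * \<xi>)" by (simp add: dB k)
    also have "\<dots> = 1 / \<xi>" using k0 by (rule nonzero_divide_mult_cancel_left)
    finally have inv\<xi>: "1 / \<xi> = of_int k * det (BB j)" by simp
    have "BB j *v e1 \<in> S_Gamma \<Gamma>" "BB j *v e2 \<in> S_Gamma \<Gamma>"
      using e_Zvec by (auto simp: S_eq D_eq)
    then obtain i1 i2 q1 q2 where q: "q1 \<in> Q' i1" "q2 \<in> Q' i2"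
      "BB j *v e1 = A' *v q1" "BB j *v e2 = A' *v q2"
      unfolding S'_eq by blast
    define i where "i = max i1 i2"
    have "q1 \<in> Q' i" "q2 \<in> Q' i" using q(1,2) Q'mono[of i1 i] Q'mono[of i2 i] by (auto simp: i_def)
    then obtain y1 y2 where y: "y1 \<in> Zvec" "y2 \<in> Zvec" "q1 = matrix_inv (As' i) *v y1"
      "q2 = matrix_inv (As' i) *v y2" by (auto simp: Q'_def)
    define C where "C = A' ** matrix_inv (As' i)"
    have ce: "BB j *v e1 = C *v y1" "BB j *v e2 = C *v y2"
      using q(3,4) y(3,4) by (simp_all add: C_def matrix_vector_mul_assoc)
    have "det (BB j) = det2 (BB j *v e1) (BB j *v e2)" by (rule det_cols)
    also have "\<dots> = det2 (C *v y1) (C *v y2)" by (simp only: ce)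
    also have "\<dots> = det C * det2 y1 y2" by (rule det2_mult)
    also have "det C = det A' / det (As' i)"
      by (simp add: C_def det_mul det_minv[OF invAs'])
    finally have dBB: "det (BB j) = det A' / det (As' i) * det2 y1 y2" by simp
    have "det2 y1 y2 \<in> \<int>" using y(1,2) by (simp add: det2_def Zvec_def)
    then obtain n where n: "det2 y1 y2 = of_int n" by (metis Ints_cases)
    have "x = of_int m * (1 / \<xi>)" by (simp add: x xij)
    also have "\<dots> = det A' / det (As' i) * of_int (m * k * n)"
      by (simp add: inv\<xi> dBB n)
    finally show "x \<in> tau (S_Gamma \<Gamma>)" unfolding tau_eq by blast
  qed
qed

end
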